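(* Let $m\ge1$ and let $u,v,p,q\in\mathbb{R}[x,y,z,w]$ be homogeneous of degree $m$ with $yp=zv$ and $yq=wv$. Define polynomials $U,V,P,Q$ by the quaternion identity $$U+\mathbf{i}V+\mathbf{j}P+\mathbf{k}Q=(x+\mathbf{i}y+\mathbf{j}z+\mathbf{k}w)(u+\mathbf{i}v+\mathbf{j}p+\mathbf{k}q),$$ and let $\Phi=(U,V,P,Q):\mathbb{R}^4\to\mathbb{R}^4$. Then at every point with $y\neq0$, $$|J(\Phi)|=\frac{(m+1)V^2\left[\,y(x^2+y^2+z^2+w^2)(v u_x-u v_x)+y^2u^2+v^2(y^2+z^2+w^2)\,\right]}{y^4}.$$
   Context: $\mathbb{H}$ is the real quaternion algebra with basis $1,\mathbf{i},\mathbf{j},\mathbf{k}$, $\mathbf{i}^2=\mathbf{j}^2=\mathbf{k}^2=-1$, $\mathbf{ij}=-\mathbf{ji}=\mathbf{k}$, $\mathbf{jk}=-\mathbf{kj}=\mathbf{i}$, $\mathbf{ki}=-\mathbf{ik}=\mathbf{j}$. For $F=(F_1,\dots,F_4):\mathbb{R}^4\to\mathbb{R}^4$ in variables $(x,y,z,w)$, $J(F)=[\partial F_i/\partial x_j]$ and $|J(F)|$ is its determinant; subscripts denote partial derivatives. *)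

theory Defs
  imports "HOL-Analysis.Analysis"
begin

definition xc :: "real^4 \<Rightarrow> real" where "xc P = P $ 1"
definition yc :: "real^4 \<Rightarrow> real" where "yc P = P $ 2"
definition zc :: "real^4 \<Rightarrow> real" where "zc P = P $ 3"
definition wc :: "real^4 \<Rightarrow> real" where "wc P = P $ 4"

definition hom_poly4 :: "nat \<Rightarrow> (real^4 \<Rightarrow> real) \<Rightarrow> bool" where
  "hom_poly4 m f \<longleftrightarrow> (\<exists>coef :: nat \<Rightarrow> nat \<Rightarrow> nat \<Rightarrow> nat \<Rightarrow> real.
     \<forall>P. f P = (\<Sum>a\<le>m. \<Sum>b\<le>m. \<Sum>c\<le>m. \<Sum>d\<le>m.
        if a + b + c + d = m
        then coef a b c d * xc P ^ a * yc P ^ b * zc P ^ c * wc P ^ d else 0))"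

text \<open>Hamilton product of quaternions a0 + i a1 + j a2 + k a3, represented as 4-tuples
(real part, i-, j-, k-components), following i^2=j^2=k^2=-1, ij=-ji=k, jk=-kj=i, ki=-ik=j.\<close>

definition qmult :: "real \<times> real \<times> real \<times> real \<Rightarrow> real \<times> real \<times> real \<times> real
                     \<Rightarrow> real \<times> real \<times> real \<times> real" where
  "qmult = (\<lambda>(a0,a1,a2,a3) (b0,b1,b2,b3).
     (a0*b0 - a1*b1 - a2*b2 - a3*b3,
      a0*b1 + a1*b0 + a2*b3 - a3*b2,
      a0*b2 - a1*b3 + a2*b0 + a3*b1,
      a0*b3 + a1*b2 - a2*b1 + a3*b0))"

definition partial :: "(real^4 \<Rightarrow> real) \<Rightarrow> 4 \<Rightarrow> real^4 \<Rightarrow> real" where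
  "partial f j P = deriv (\<lambda>t. f (P + t *\<^sub>R axis j 1)) 0"

definition jacobian4 :: "(real^4 \<Rightarrow> real^4) \<Rightarrow> real^4 \<Rightarrow> real^4^4" where
  "jacobian4 F P = (\<chi> i j. partial (\<lambda>Q. F Q $ i) j P)"

end

theory Submission imports Defs begin

definition D4 :: "real \<Rightarrow> real \<Rightarrow> real \<Rightarrow> real \<Rightarrow> real \<Rightarrow> real \<Rightarrow> real \<Rightarrow> real \<Rightarrow>
  real \<Rightarrow> real \<Rightarrow> real \<Rightarrow> real \<Rightarrow> real \<Rightarrow> real \<Rightarrow> real \<Rightarrow> real \<Rightarrow> real" where
 "D4 A11 A12 A13 A14 A21 A22 A23 A24 A31 A32 A33 A34 A41 A42 A43 A44 =
        A11*A22*A33*A44 - A11*A22*A34*A43 - A11*A23*A32*A44 + A11*A23*A34*A42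
       + A11*A24*A32*A43 - A11*A24*A33*A42 - A12*A21*A33*A44 + A12*A21*A34*A43
       + A12*A23*A31*A44 - A12*A23*A34*A41 - A12*A24*A31*A43 + A12*A24*A33*A41
       + A13*A21*A32*A44 - A13*A21*A34*A42 - A13*A22*A31*A44 + A13*A22*A34*A41
       + A13*A24*A31*A42 - A13*A24*A32*A41 - A14*A21*A32*A43 + A14*A21*A33*A42
       + A14*A22*A31*A43 - A14*A22*A33*A41 - A14*A23*A31*A42 + A14*A23*A32*A41"

lemma D4_rowop: "D4 a1 a2 a3 a4 b1 b2 b3 b4 (s*b1+V*c1) (s*b2+V*c2) (s*b3+V*c3) (s*b4+V*c4)
   (t*b1+V*d1) (t*b2+V*d2) (t*b3+V*d3) (t*b4+V*d4) = V^2 * D4 a1 a2 a3 a4 b1 b2 b3 b4 c1 c2 c3 c4 d1 d2 d3 d4"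
  unfolding D4_def by algebra

lemma D4_special: "(y::real) \<noteq> 0 \<Longrightarrow> D4 a1 a2 a3 a4 b1 b2 b3 b4 0 (-z/y^2) (1/y) 0 0 (-w/y^2) 0 (1/y)
   = (a1*(y*b2 + z*b3 + w*b4) - b1*(y*a2+z*a3+w*a4))/y^3"
  unfolding D4_def by (simp add: field_simps) algebra


lemma alg:
  fixes x y z w u g p q u1 u2 u3 u4 g1 g2 g3 g4 p1 p2 p3 p4 q1 q2 q3 q4 m :: real
  assumes y: "y \<noteq> 0"
  and hp: "y*p = z*g" and hq: "y*q = w*g"
  and eu: "x*u1+y*u2+z*u3+w*u4 = m*u" and ev: "x*g1+y*g2+z*g3+w*g4 = m*g"
  and d: "y*p1 = z*g1" "y*p2 + p = z*g2" "y*p3 = g + z*g3" "y*p4 = z*g4"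
  "y*q1 = w*g1" "y*q2 + q = w*g2" "y*q3 = w*g3" "y*q4 = g + w*g4"
  and A: "A11 = u + x*u1 - y*g1 - z*p1 - w*q1"
  "A12 = x*u2 - g - y*g2 - z*p2 - w*q2"
  "A13 = x*u3 - y*g3 - p - z*p3 - w*q3"
  "A14 = x*u4 - y*g4 - z*p4 - q - w*q4"
  "A21 = g + x*g1 + y*u1 + z*q1 - w*p1"
  "A22 = x*g2 + u + y*u2 + z*q2 - w*p2"
  "A23 = x*g3 + y*u3 + q + z*q3 - w*p3"
  "A24 = x*g4 + y*u4 + z*q4 - p - w*p4"
  "A31 = p + x*p1 - y*q1 + z*u1 + w*g1"
  "A32 = x*p2 - q - y*q2 + z*u2 + w*g2"
  "A33 = x*p3 - y*q3 + u + z*u3 + w*g3"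
  "A34 = x*p4 - y*q4 + z*u4 + g + w*g4"
  "A41 = q + x*q1 + y*p1 - z*g1 + w*u1"
  "A42 = x*q2 + p + y*p2 - z*g2 + w*u2"
  "A43 = x*q3 + y*p3 - g - z*g3 + w*u3"
  "A44 = x*q4 + y*p4 - z*g4 + u + w*u4"
  and GG: "GG = x*g + y*u + z*q - w*p"
  shows "D4 A11 A12 A13 A14 A21 A22 A23 A24 A31 A32 A33 A34 A41 A42 A43 A44
     = (m + 1) * GG^2 * (y * (x^2+y^2+z^2+w^2) * (g*u1 - u*g1) + y^2*u^2 + g^2*(y^2+z^2+w^2)) / y^4"
proof -
  have p: "p = z*g/y" using hp y by (simp add: field_simps)
  have q: "q = w*g/y" using hq y by (simp add: field_simps)
  have pp: "p1 = z*g1/y" "p2 = (z*g2 - p)/y" "p3 = (g+z*g3)/y" "p4 = z*g4/y"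
    using d y by (simp_all add: field_simps)
  have qq: "q1 = w*g1/y" "q2 = (w*g2 - q)/y" "q3 = w*g3/y" "q4 = (g+w*g4)/y"
    using d y by (simp_all add: field_simps)
  have u2: "u2 = (m*u - x*u1 - z*u3 - w*u4)/y" using eu y by (simp add: field_simps)
  have g2: "g2 = (m*g - x*g1 - z*g3 - w*g4)/y" using ev y by (simp add: field_simps)
  define UU where "UU = x*u - y*g - z*p - w*q"
  have r3: "A31 = (z/y)*A21 + GG*0" "A32 = (z/y)*A22 + GG*(-z/y^2)"
     "A33 = (z/y)*A23 + GG*(1/y)" "A34 = (z/y)*A24 + GG*0"
    unfolding A GG pp qq p q using y by (simp_all add: field_simps power2_eq_square)
  have r4: "A41 = (w/y)*A21 + GG*0" "A42 = (w/y)*A22 + GG*(-w/y^2)"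
     "A43 = (w/y)*A23 + GG*0" "A44 = (w/y)*A24 + GG*(1/y)"
    unfolding A GG pp qq p q using y by (simp_all add: field_simps power2_eq_square)
  have e1: "y*A12 + z*A13 + w*A14 = (m+1)*UU - x*A11"
    unfolding A UU_def pp qq p q u2 g2 using y by (simp add: field_simps; simp add: algebra_simps)
  have e2: "y*A22 + z*A23 + w*A24 = (m+1)*GG - x*A21"
    unfolding A GG pp qq p q u2 g2 using y by (simp add: field_simps; simp add: algebra_simps)
  have "D4 A11 A12 A13 A14 A21 A22 A23 A24 A31 A32 A33 A34 A41 A42 A43 A44
     = GG^2 * D4 A11 A12 A13 A14 A21 A22 A23 A24 0 (-z/y^2) (1/y) 0 0 (-w/y^2) 0 (1/y)"
    unfolding r3 r4 by (rule D4_rowop)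
  also have "\<dots> = GG^2 * ((A11*((m+1)*GG - x*A21) - A21*((m+1)*UU - x*A11))/y^3)"
    using D4_special[OF y] e1 e2 by simp
  also have "\<dots> = (m+1)*GG^2*(A11*GG - A21*UU)/y^3" by (simp add: algebra_simps)
  also have "A11*GG - A21*UU = (y * (x^2+y^2+z^2+w^2) * (g*u1 - u*g1) + y^2*u^2 + g^2*(y^2+z^2+w^2))/y"
    unfolding A GG UU_def pp qq p q using y by (simp add: field_simps power2_eq_square; simp add: algebra_simps)
  finally have "D4 A11 A12 A13 A14 A21 A22 A23 A24 A31 A32 A33 A34 A41 A42 A43 A44
     = (m+1)*GG^2*((y * (x^2+y^2+z^2+w^2) * (g*u1 - u*g1) + y^2*u^2 + g^2*(y^2+z^2+w^2))/y)/y^3" .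
  also have "\<dots> = (m+1)*GG^2*(y * (x^2+y^2+z^2+w^2) * (g*u1 - u*g1) + y^2*u^2 + g^2*(y^2+z^2+w^2))/(y*y^3)"
    by simp
  finally show ?thesis by (simp add: power_Suc[symmetric] mult.commute)
qed

lemma det_4: "det (A::real^4^4) = D4 (A$1$1) (A$1$2) (A$1$3) (A$1$4) (A$2$1) (A$2$2) (A$2$3) (A$2$4)
   (A$3$1) (A$3$2) (A$3$3) (A$3$4) (A$4$1) (A$4$2) (A$4$3) (A$4$4)"
proof -
  have f1: "finite {2::4, 3, 4}" "1 \<notin> {2::4, 3, 4}" by auto
  have f2: "finite {3::4, 4}" "2 \<notin> {3::4, 4}" by auto
  have f3: "finite {4::4}" "3 \<notin> {4::4}" by auto
  show ?thesis
    unfolding det_def UNIV_4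
    unfolding sum_over_permutations_insert[OF f1]
    unfolding sum_over_permutations_insert[OF f2]
    unfolding sum_over_permutations_insert[OF f3]
    unfolding permutes_sing
    by (simp add: sign_swap_id permutation_swap_id sign_compose permutation_compose sign_id swap_id_eq D4_def algebra_simps)
qed

lemma if_differentiable: "g differentiable F \<Longrightarrow> (\<lambda>P. if C then g P else (0::real)) differentiable F"
  by (cases C) simp_all

lemma coord_differentiable: "(\<lambda>P::real^4. P $ i) differentiable F"
  using bounded_linear_imp_differentiable[OF bounded_linear_vec_nth] .

lemma hp_diff: assumes "hom_poly4 m f" shows "f differentiable (at X)"
proof -
  obtain coef where c: "\<And>P. f P = (\<Sum>a\<le>m. \<Sum>b\<le>m. \<Sum>c\<le>m. \<Sum>d\<le>m.
        if a + b + c + d = m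
        then coef a b c d * xc P ^ a * yc P ^ b * zc P ^ c * wc P ^ d else 0)"
    using assms unfolding hom_poly4_def by blast
  have e: "f = (\<lambda>P. (\<Sum>a\<le>m. \<Sum>b\<le>m. \<Sum>c\<le>m. \<Sum>d\<le>m.
        if a + b + c + d = m
        then coef a b c d * xc P ^ a * yc P ^ b * zc P ^ c * wc P ^ d else 0))"
    using c by (intro ext) simp
  have "(\<lambda>P. (\<Sum>a\<le>m. \<Sum>b\<le>m. \<Sum>c\<le>m. \<Sum>d\<le>m.
        if a + b + c + d = m
        then coef a b c d * xc P ^ a * yc P ^ b * zc P ^ c * wc P ^ d else 0)) differentiable (at X)"
    unfolding xc_def yc_def zc_def wc_def
    by (auto intro!: differentiable_sum if_differentiable differentiable_mult differentiable_power
        differentiable_const coord_differentiable)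
  then show ?thesis using e by simp
qed

lemma hp_hom: assumes "hom_poly4 m f" shows "f (s *\<^sub>R X) = s^m * f X"
proof -
  obtain coef where c: "\<And>P. f P = (\<Sum>a\<le>m. \<Sum>b\<le>m. \<Sum>c\<le>m. \<Sum>d\<le>m.
        if a + b + c + d = m
        then coef a b c d * xc P ^ a * yc P ^ b * zc P ^ c * wc P ^ d else 0)"
    using assms unfolding hom_poly4_def by blast
  have "f (s *\<^sub>R X) = (\<Sum>a\<le>m. \<Sum>b\<le>m. \<Sum>c\<le>m. \<Sum>d\<le>m.
        s^m * (if a + b + c + d = m
        then coef a b c d * xc X ^ a * yc X ^ b * zc X ^ c * wc X ^ d else 0))"
    unfolding c
  proof (intro sum.cong refl)
    fix a b c d assume "a \<in> {..m}" "b \<in> {..m}" "c \<in> {..m}" "d \<in> {..m}"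
    show "(if a + b + c + d = m
        then coef a b c d * xc (s *\<^sub>R X) ^ a * yc (s *\<^sub>R X) ^ b * zc (s *\<^sub>R X) ^ c * wc (s *\<^sub>R X) ^ d else 0)
       = s^m * (if a + b + c + d = m
        then coef a b c d * xc X ^ a * yc X ^ b * zc X ^ c * wc X ^ d else 0)"
    proof (cases "a + b + c + d = m")
      case True
      then have "s^m = s^a * s^b * s^c * s^d" by (simp add: power_add[symmetric])
      then show ?thesis using True
        by (simp add: xc_def yc_def zc_def wc_def power_mult_distrib)
    qed simp
  qed
  also have "\<dots> = s^m * f X" unfolding c by (simp add: sum_distrib_left)
  finally show ?thesis .
qed

lemma partial_D: assumes "(f has_derivative D) (at X)"
  shows "partial f j X = D (axis j 1)"
proof -
  have l: "((\<lambda>t. X + t *\<^sub>R axis j 1) has_derivative (\<lambda>t. t *\<^sub>R axis j 1)) (at 0)"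
    by (auto intro!: derivative_eq_intros)
  have a: "(f has_derivative D) (at (X + 0 *\<^sub>R axis j 1))" using assms by simp
  have "((f \<circ> (\<lambda>t. X + t *\<^sub>R axis j 1)) has_derivative (D \<circ> (\<lambda>t. t *\<^sub>R axis j 1))) (at 0)"
    by (rule diff_chain_at[OF l a])
  moreover have "D \<circ> (\<lambda>t. t *\<^sub>R axis j 1) = (\<lambda>t. D (axis j 1) * t)"
    using has_derivative_bounded_linear[OF assms]
    by (auto simp: fun_eq_iff linear_simps(5) bounded_linear.linear)
  ultimately have "((\<lambda>t. f (X + t *\<^sub>R axis j 1)) has_field_derivative D (axis j 1)) (at 0)"
    by (simp add: has_field_derivative_def o_def)
  then show ?thesis unfolding partial_def by (rule DERIV_imp_deriv)
qed

lemma euler: assumes "hom_poly4 m f" "(f has_derivative D) (at X)"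
  shows "D X = real m * f X"
proof -
  have l: "((\<lambda>s. s *\<^sub>R X) has_derivative (\<lambda>s. s *\<^sub>R X)) (at 1)"
    by (auto intro!: derivative_eq_intros)
  have a: "(f has_derivative D) (at (1 *\<^sub>R X))" using assms by simp
  have "((f \<circ> (\<lambda>s. s *\<^sub>R X)) has_derivative (D \<circ> (\<lambda>s. s *\<^sub>R X))) (at 1)"
    by (rule diff_chain_at[OF l a])
  moreover have "D \<circ> (\<lambda>s. s *\<^sub>R X) = (\<lambda>s. D X * s)"
    using has_derivative_bounded_linear[OF assms(2)]
    by (auto simp: fun_eq_iff linear_simps(5) bounded_linear.linear)
  moreover have "f \<circ> (\<lambda>s. s *\<^sub>R X) = (\<lambda>s. s^m * f X)"
    using hp_hom[OF assms(1)] by (auto simp: fun_eq_iff)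
  ultimately have 1: "((\<lambda>s. s^m * f X) has_field_derivative D X) (at 1)"
    by (simp add: has_field_derivative_def)
  have 2: "((\<lambda>s. s^m * f X) has_field_derivative (real m * 1^(m-1) * f X)) (at 1)"
    by (auto intro!: derivative_eq_intros)
  show ?thesis using DERIV_unique[OF 1 2] by simp
qed

lemma lin_expand: assumes "bounded_linear D"
  shows "D (X::real^4) = X$1 * D (axis 1 1) + X$2 * D (axis 2 1) + X$3 * D (axis 3 1) + X$4 * D (axis 4 1)"
proof -
  have "X = X$1 *\<^sub>R axis 1 1 + X$2 *\<^sub>R axis 2 1 + X$3 *\<^sub>R axis 3 1 + X$4 *\<^sub>R axis 4 1"
    by (simp add: vec_eq_iff forall_4 axis_def)
  then have "D X = D (X$1 *\<^sub>R axis 1 1 + X$2 *\<^sub>R axis 2 1 + X$3 *\<^sub>R axis 3 1 + X$4 *\<^sub>R axis 4 1)"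
    by simp
  also have "\<dots> = X$1 * D (axis 1 1) + X$2 * D (axis 2 1) + X$3 * D (axis 3 1) + X$4 * D (axis 4 1)"
    using assms by (simp add: bounded_linear.linear linear_simps)
  finally show ?thesis .
qed

theorem corollary3p1:
  fixes m :: nat and u v p q :: "real^4 \<Rightarrow> real"
    and U V P Q :: "real^4 \<Rightarrow> real" and \<Phi> :: "real^4 \<Rightarrow> real^4"
  assumes "m \<ge> 1"
    and "hom_poly4 m u" and "hom_poly4 m v" and "hom_poly4 m p" and "hom_poly4 m q"
    and "\<And>X. yc X * p X = zc X * v X"
    and "\<And>X. yc X * q X = wc X * v X"
    and "\<And>X. (U X, V X, P X, Q X) = qmult (xc X, yc X, zc X, wc X) (u X, v X, p X, q X)"
    and "\<And>X. \<Phi> X $ 1 = U X" and "\<And>X. \<Phi> X $ 2 = V X"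
    and "\<And>X. \<Phi> X $ 3 = P X" and "\<And>X. \<Phi> X $ 4 = Q X"
    and "yc X0 \<noteq> 0"
  shows "det (jacobian4 \<Phi> X0) =
    (real m + 1) * (V X0)^2 *
      (yc X0 * ((xc X0)^2 + (yc X0)^2 + (zc X0)^2 + (wc X0)^2)
          * (v X0 * partial u 1 X0 - u X0 * partial v 1 X0)
       + (yc X0)^2 * (u X0)^2
       + (v X0)^2 * ((yc X0)^2 + (zc X0)^2 + (wc X0)^2)) / (yc X0)^4"
proof -
  obtain Du where du: "(u has_derivative Du) (at X0)" using hp_diff[OF assms(2)] unfolding differentiable_def by blast
  obtain Dv where dv: "(v has_derivative Dv) (at X0)" using hp_diff[OF assms(3)] unfolding differentiable_def by blast
  obtain Dp where dp: "(p has_derivative Dp) (at X0)" using hp_diff[OF assms(4)] unfolding differentiable_def by blast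
  obtain Dq where dq: "(q has_derivative Dq) (at X0)" using hp_diff[OF assms(5)] unfolding differentiable_def by blast
  have cx: "(xc has_derivative xc) (at X0)"
  proof -
    have e: "xc = (\<lambda>P. P$1)" by (simp add: fun_eq_iff xc_def)
    show ?thesis unfolding e by (rule bounded_linear_imp_has_derivative[OF bounded_linear_vec_nth])
  qed
  have cy: "(yc has_derivative yc) (at X0)"
  proof -
    have e: "yc = (\<lambda>P. P$2)" by (simp add: fun_eq_iff yc_def)
    show ?thesis unfolding e by (rule bounded_linear_imp_has_derivative[OF bounded_linear_vec_nth])
  qed
  have cz: "(zc has_derivative zc) (at X0)"
  proof -
    have e: "zc = (\<lambda>P. P$3)" by (simp add: fun_eq_iff zc_def)
    show ?thesis unfolding e by (rule bounded_linear_imp_has_derivative[OF bounded_linear_vec_nth])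
  qed
  have cw: "(wc has_derivative wc) (at X0)"
  proof -
    have e: "wc = (\<lambda>P. P$4)" by (simp add: fun_eq_iff wc_def)
    show ?thesis unfolding e by (rule bounded_linear_imp_has_derivative[OF bounded_linear_vec_nth])
  qed
  have f1: "(\<lambda>X. \<Phi> X $ 1) = (\<lambda>X. xc X * u X - yc X * v X - zc X * p X - wc X * q X)"
    using assms(8,9) by (auto simp: fun_eq_iff qmult_def)
  have f2: "(\<lambda>X. \<Phi> X $ 2) = (\<lambda>X. xc X * v X + yc X * u X + zc X * q X - wc X * p X)"
    using assms(8,10) by (auto simp: fun_eq_iff qmult_def)
  have f3: "(\<lambda>X. \<Phi> X $ 3) = (\<lambda>X. xc X * p X - yc X * q X + zc X * u X + wc X * v X)"
    using assms(8,11) by (auto simp: fun_eq_iff qmult_def)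
  have f4: "(\<lambda>X. \<Phi> X $ 4) = (\<lambda>X. xc X * q X + yc X * p X - zc X * v X + wc X * u X)"
    using assms(8,12) by (auto simp: fun_eq_iff qmult_def)
  have D1: "((\<lambda>X. \<Phi> X $ 1) has_derivative (\<lambda>h. (xc X0 * Du h + xc h * u X0) - (yc X0 * Dv h + yc h * v X0)
     - (zc X0 * Dp h + zc h * p X0) - (wc X0 * Dq h + wc h * q X0))) (at X0)"
    unfolding f1 by (intro has_derivative_diff has_derivative_add has_derivative_mult cx cy cz cw du dv dp dq)
  have D2: "((\<lambda>X. \<Phi> X $ 2) has_derivative (\<lambda>h. (xc X0 * Dv h + xc h * v X0) + (yc X0 * Du h + yc h * u X0)
     + (zc X0 * Dq h + zc h * q X0) - (wc X0 * Dp h + wc h * p X0))) (at X0)"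
    unfolding f2 by (intro has_derivative_diff has_derivative_add has_derivative_mult cx cy cz cw du dv dp dq)
  have D3: "((\<lambda>X. \<Phi> X $ 3) has_derivative (\<lambda>h. (xc X0 * Dp h + xc h * p X0) - (yc X0 * Dq h + yc h * q X0)
     + (zc X0 * Du h + zc h * u X0) + (wc X0 * Dv h + wc h * v X0))) (at X0)"
    unfolding f3 by (intro has_derivative_diff has_derivative_add has_derivative_mult cx cy cz cw du dv dp dq)
  have D4': "((\<lambda>X. \<Phi> X $ 4) has_derivative (\<lambda>h. (xc X0 * Dq h + xc h * q X0) + (yc X0 * Dp h + yc h * p X0)
     - (zc X0 * Dv h + zc h * v X0) + (wc X0 * Du h + wc h * u X0))) (at X0)"
    unfolding f4 by (intro has_derivative_diff has_derivative_add has_derivative_mult cx cy cz cw du dv dp dq)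
  have rp: "(\<lambda>h. yc X0 * Dp h + yc h * p X0) = (\<lambda>h. zc X0 * Dv h + zc h * v X0)"
  proof (rule has_derivative_unique)
    show "((\<lambda>X. yc X * p X) has_derivative (\<lambda>h. yc X0 * Dp h + yc h * p X0)) (at X0)"
      by (intro has_derivative_mult cy dp)
    have "(\<lambda>X. yc X * p X) = (\<lambda>X. zc X * v X)" using assms(6) by auto
    then show "((\<lambda>X. yc X * p X) has_derivative (\<lambda>h. zc X0 * Dv h + zc h * v X0)) (at X0)"
      using has_derivative_mult[OF cz dv] by simp
  qed
  have rq: "(\<lambda>h. yc X0 * Dq h + yc h * q X0) = (\<lambda>h. wc X0 * Dv h + wc h * v X0)"
  proof (rule has_derivative_unique)
    show "((\<lambda>X. yc X * q X) has_derivative (\<lambda>h. yc X0 * Dq h + yc h * q X0)) (at X0)"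
      by (intro has_derivative_mult cy dq)
    have "(\<lambda>X. yc X * q X) = (\<lambda>X. wc X * v X)" using assms(7) by auto
    then show "((\<lambda>X. yc X * q X) has_derivative (\<lambda>h. wc X0 * Dv h + wc h * v X0)) (at X0)"
      using has_derivative_mult[OF cw dv] by simp
  qed
  have ax: "xc (axis 1 1) = 1" "yc (axis 1 1) = 0" "zc (axis 1 1) = 0" "wc (axis 1 1) = 0"
    "xc (axis 2 1) = 0" "yc (axis 2 1) = 1" "zc (axis 2 1) = 0" "wc (axis 2 1) = 0"
    "xc (axis 3 1) = 0" "yc (axis 3 1) = 0" "zc (axis 3 1) = 1" "wc (axis 3 1) = 0"
    "xc (axis 4 1) = 0" "yc (axis 4 1) = 0" "zc (axis 4 1) = 0" "wc (axis 4 1) = 1"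
    by (simp_all add: xc_def yc_def zc_def wc_def axis_def)
  have rp1: "\<And>h. yc X0 * Dp h + yc h * p X0 = zc X0 * Dv h + zc h * v X0" using rp by meson
  have rq1: "\<And>h. yc X0 * Dq h + yc h * q X0 = wc X0 * Dv h + wc h * v X0" using rq by meson
  have eu: "xc X0 * Du (axis 1 1) + yc X0 * Du (axis 2 1) + zc X0 * Du (axis 3 1) + wc X0 * Du (axis 4 1) = real m * u X0"
    using euler[OF assms(2) du] lin_expand[OF has_derivative_bounded_linear[OF du], of X0]
    by (simp add: xc_def yc_def zc_def wc_def)
  have ev: "xc X0 * Dv (axis 1 1) + yc X0 * Dv (axis 2 1) + zc X0 * Dv (axis 3 1) + wc X0 * Dv (axis 4 1) = real m * v X0"
    using euler[OF assms(3) dv] lin_expand[OF has_derivative_bounded_linear[OF dv], of X0]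
    by (simp add: xc_def yc_def zc_def wc_def)
  have J: "\<And>i j. jacobian4 \<Phi> X0 $ i $ j = partial (\<lambda>Q. \<Phi> Q $ i) j X0"
    by (simp add: jacobian4_def)
  have VV: "V X0 = xc X0 * v X0 + yc X0 * u X0 + zc X0 * q X0 - wc X0 * p X0"
    using fun_cong[OF f2, of X0] assms(10) by simp
  have pu: "partial u 1 X0 = Du (axis 1 1)" by (rule partial_D[OF du])
  have pv: "partial v 1 X0 = Dv (axis 1 1)" by (rule partial_D[OF dv])
  show ?thesis
    unfolding det_4 J partial_D[OF D1] partial_D[OF D2] partial_D[OF D3] partial_D[OF D4'] pu pv
    apply (rule alg[where ?u1.0 = "Du (axis 1 1)" and ?u2.0 = "Du (axis 2 1)" and ?u3.0 = "Du (axis 3 1)" and ?u4.0 = "Du (axis 4 1)" and ?g1.0 = "Dv (axis 1 1)" and ?g2.0 = "Dv (axis 2 1)" and ?g3.0 = "Dv (axis 3 1)" and ?g4.0 = "Dv (axis 4 1)" and ?p1.0 = "Dp (axis 1 1)" and ?p2.0 = "Dp (axis 2 1)" and ?p3.0 = "Dp (axis 3 1)" and ?p4.0 = "Dp (axis 4 1)" and ?q1.0 = "Dq (axis 1 1)" and ?q2.0 = "Dq (axis 2 1)" and ?q3.0 = "Dq (axis 3 1)" and ?q4.0 = "Dq (axis 4 1)", OF assms(13) assms(6) assms(7) eu ev])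
    using rp1[of "axis 1 1"] rp1[of "axis 2 1"] rp1[of "axis 3 1"] rp1[of "axis 4 1"]
      rq1[of "axis 1 1"] rq1[of "axis 2 1"] rq1[of "axis 3 1"] rq1[of "axis 4 1"] VV
    by (simp_all add: ax algebra_simps)
qed
end
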